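(* Let $M$ be a finite abelian group of order $m$ and $J$ a Jacobi function on $M$. Suppose $i\colon\hat{M}\to\hat{M}$ is a bijection with $i(x)=x\,i(x^{-1})$ for all $x\in\hat{M}$, such that $J(\alpha,\beta)=\frac{1}{m}\sum_{x\in\hat{M}}\alpha(i(x))\beta(i(x)x^{-1})$ for all $\alpha,\beta\in M$. Then $M$ is the trivial group.
   Context: $\hat{M}$ is the Pontryagin dual of $M$, written multiplicatively; for $\alpha\in M$, $x\in\hat{M}$, $\alpha(x)$ is the value of the character $x$ at $\alpha$. $\delta(\alpha)=1$ if $\alpha$ is the identity of $M$ and $0$ otherwise. A Jacobi function on $M$ is a function $J\colon M\times M\to\mathbf{C}$ satisfying: (A) $J(\alpha,\beta)=J(\beta,\alpha)$; (B) with $J^*(\alpha,\beta)=-\delta(\alpha)-\delta(\beta)+J(\alpha,\beta)$, $J^*(\alpha,\beta)J^*(\alpha\beta,\gamma)=J^*(\alpha,\beta\gamma)J^*(\beta,\gamma)$; (C) $\sum_{\beta\in M}J(\alpha_1\beta,\alpha_2\beta^{-1})J(\alpha_3\beta,\alpha_4\beta^{-1})=J(\alpha_1\alpha_4,\alpha_2\alpha_3)$; all for all elements of $M$. *)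

theory Defs
  imports "HOL-Algebra.Group" "HOL-Library.FuncSet" Complex_Main
begin

definition characters :: "('a, 'b) monoid_scheme \<Rightarrow> ('a \<Rightarrow> complex) set" where
  "characters M = {\<chi>. \<chi> \<in> extensional (carrier M) \<and>
      (\<forall>a\<in>carrier M. cmod (\<chi> a) = 1) \<and>
      (\<forall>a\<in>carrier M. \<forall>b\<in>carrier M. \<chi> (a \<otimes>\<^bsub>M\<^esub> b) = \<chi> a * \<chi> b)}"

definition char_mult :: "('a, 'b) monoid_scheme \<Rightarrow> ('a \<Rightarrow> complex) \<Rightarrow> ('a \<Rightarrow> complex) \<Rightarrow> ('a \<Rightarrow> complex)" where
  "char_mult M x y = (\<lambda>a\<in>carrier M. x a * y a)"

definition char_inv :: "('a, 'b) monoid_scheme \<Rightarrow> ('a \<Rightarrow> complex) \<Rightarrow> ('a \<Rightarrow> complex)" where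
  "char_inv M x = (\<lambda>a\<in>carrier M. inverse (x a))"

definition delta :: "('a, 'b) monoid_scheme \<Rightarrow> 'a \<Rightarrow> complex" where
  "delta M a = (if a = \<one>\<^bsub>M\<^esub> then 1 else 0)"

definition Jstar :: "('a, 'b) monoid_scheme \<Rightarrow> ('a \<Rightarrow> 'a \<Rightarrow> complex) \<Rightarrow> 'a \<Rightarrow> 'a \<Rightarrow> complex" where
  "Jstar M J a b = - delta M a - delta M b + J a b"

definition jacobi_function :: "('a, 'b) monoid_scheme \<Rightarrow> ('a \<Rightarrow> 'a \<Rightarrow> complex) \<Rightarrow> bool" where
  "jacobi_function M J \<longleftrightarrow>
     (\<forall>a\<in>carrier M. \<forall>b\<in>carrier M. J a b = J b a) \<and>
     (\<forall>a\<in>carrier M. \<forall>b\<in>carrier M. \<forall>c\<in>carrier M.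
        Jstar M J a b * Jstar M J (a \<otimes>\<^bsub>M\<^esub> b) c = Jstar M J a (b \<otimes>\<^bsub>M\<^esub> c) * Jstar M J b c) \<and>
     (\<forall>a1\<in>carrier M. \<forall>a2\<in>carrier M. \<forall>a3\<in>carrier M. \<forall>a4\<in>carrier M.
        (\<Sum>b\<in>carrier M. J (a1 \<otimes>\<^bsub>M\<^esub> b) (a2 \<otimes>\<^bsub>M\<^esub> inv\<^bsub>M\<^esub> b) *
                         J (a3 \<otimes>\<^bsub>M\<^esub> b) (a4 \<otimes>\<^bsub>M\<^esub> inv\<^bsub>M\<^esub> b))
        = J (a1 \<otimes>\<^bsub>M\<^esub> a4) (a2 \<otimes>\<^bsub>M\<^esub> a3))"

end

theory Submission
  imports Defs "HOL-Algebra.Multiplicative_Group"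
begin


definition echar :: "('a, 'b) monoid_scheme \<Rightarrow> ('a \<Rightarrow> complex)" where
  "echar M = (\<lambda>a\<in>carrier M. 1)"

lemma char_nz: "\<chi> \<in> characters M \<Longrightarrow> a \<in> carrier M \<Longrightarrow> \<chi> a \<noteq> 0"
  unfolding characters_def by force

lemma char_mul: "\<chi> \<in> characters M \<Longrightarrow> a \<in> carrier M \<Longrightarrow> b \<in> carrier M \<Longrightarrow> \<chi> (a \<otimes>\<^bsub>M\<^esub> b) = \<chi> a * \<chi> b"
  unfolding characters_def by blast

lemma char_ext: "\<chi> \<in> characters M \<Longrightarrow> a \<notin> carrier M \<Longrightarrow> \<chi> a = undefined"
  unfolding characters_def extensional_def by blast

lemma char_norm: "\<chi> \<in> characters M \<Longrightarrow> a \<in> carrier M \<Longrightarrow> cmod (\<chi> a) = 1"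
  unfolding characters_def by blast

lemma char_eqI: "\<chi> \<in> characters M \<Longrightarrow> \<psi> \<in> characters M \<Longrightarrow> (\<And>a. a \<in> carrier M \<Longrightarrow> \<chi> a = \<psi> a) \<Longrightarrow> \<chi> = \<psi>"
  by (rule ext) (metis char_ext)

lemma char_one: assumes "group M" "\<chi> \<in> characters M" shows "\<chi> \<one>\<^bsub>M\<^esub> = 1"
proof -
  interpret group M by fact
  have "\<chi> \<one>\<^bsub>M\<^esub> = \<chi> \<one>\<^bsub>M\<^esub> * \<chi> \<one>\<^bsub>M\<^esub>" using char_mul[OF assms(2), of "\<one>\<^bsub>M\<^esub>" "\<one>\<^bsub>M\<^esub>"] by simp
  thus ?thesis using char_nz[OF assms(2), of "\<one>\<^bsub>M\<^esub>"] by simp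
qed

lemma char_invval: assumes "group M" "\<chi> \<in> characters M" "a \<in> carrier M"
  shows "\<chi> (inv\<^bsub>M\<^esub> a) = inverse (\<chi> a)"
proof -
  interpret group M by fact
  have "\<chi> (inv\<^bsub>M\<^esub> a) * \<chi> a = 1" using char_mul[OF assms(2), of "inv\<^bsub>M\<^esub> a" a] char_one[OF assms(1,2)] assms(3) by simp
  thus ?thesis by (metis inverse_unique mult.commute)
qed


lemma echar_in: "group M \<Longrightarrow> echar M \<in> characters M"
  unfolding characters_def echar_def by (auto simp: extensional_def monoid.m_closed group.is_monoid)

lemma char_mult_in: "\<chi> \<in> characters M \<Longrightarrow> \<psi> \<in> characters M \<Longrightarrow> group M \<Longrightarrow> char_mult M \<chi> \<psi> \<in> characters M"
  unfolding characters_def char_mult_def by (auto simp: norm_mult monoid.m_closed group.is_monoid)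

lemma char_inv_in: "\<chi> \<in> characters M \<Longrightarrow> group M \<Longrightarrow> char_inv M \<chi> \<in> characters M"
  unfolding characters_def char_inv_def by (auto simp: norm_inverse monoid.m_closed group.is_monoid)

lemma char_mult_val: "a \<in> carrier M \<Longrightarrow> char_mult M \<chi> \<psi> a = \<chi> a * \<psi> a"
  by (simp add: char_mult_def)
lemma char_inv_val: "a \<in> carrier M \<Longrightarrow> char_inv M \<chi> a = inverse (\<chi> a)"
  by (simp add: char_inv_def)
lemma echar_val: "a \<in> carrier M \<Longrightarrow> echar M a = 1"
  by (simp add: echar_def)

lemma char_pow: assumes "group M" "\<chi> \<in> characters M" "a \<in> carrier M"
  shows "\<chi> (a [^]\<^bsub>M\<^esub> (k::nat)) = \<chi> a ^ k"
proof (induction k)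
  case 0 thus ?case using char_one[OF assms(1,2)] by simp
next
  case (Suc k)
  interpret group M by fact
  show ?case using Suc char_mul[OF assms(2), of "a [^]\<^bsub>M\<^esub> k" a] assms(3) by (simp add: mult.commute)
qed

lemma finite_chars: assumes "group M" "finite (carrier M)" shows "finite (characters M)"
proof -
  interpret group M by fact
  let ?n = "order M"
  have n: "?n \<ge> 1" using assms(2) order_gt_0_iff_finite by (simp add: Suc_le_eq)
  have "characters M \<subseteq> PiE (carrier M) (\<lambda>_. {z::complex. z ^ ?n = 1})"
  proof
    fix \<chi> assume c: "\<chi> \<in> characters M"
    show "\<chi> \<in> PiE (carrier M) (\<lambda>_. {z::complex. z ^ ?n = 1})"
    proof (rule PiE_I)
      fix a assume a: "a \<in> carrier M"
      have "\<chi> a ^ ?n = \<chi> (a [^]\<^bsub>M\<^esub> ?n)" using char_pow[OF assms(1) c a] by simp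
      also have "\<dots> = 1" using pow_order_eq_1[OF a] char_one[OF assms(1) c] by simp
      finally show "\<chi> a \<in> {z. z ^ ?n = 1}" by simp
    next
      fix a assume "a \<notin> carrier M" thus "\<chi> a = undefined" using char_ext[OF c] by simp
    qed
  qed
  moreover have "finite (PiE (carrier M) (\<lambda>_. {z::complex. z ^ ?n = 1}))"
    using finite_roots_unity[OF n] assms(2) by (intro finite_PiE) auto
  ultimately show ?thesis by (rule finite_subset)
qed

lemma char_sum: assumes "group M" "finite (carrier M)" "\<chi> \<in> characters M"
  shows "(\<Sum>a\<in>carrier M. \<chi> a) = (if \<chi> = echar M then of_nat (card (carrier M)) else 0)"
proof (cases "\<chi> = echar M")
  case True thus ?thesis by (simp add: echar_def)
next
  case False
  interpret group M by fact
  obtain b where b: "b \<in> carrier M" "\<chi> b \<noteq> 1"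
    using False char_eqI[OF assms(3) echar_in[OF assms(1)]] by (auto simp: echar_val)
  have "(\<Sum>a\<in>carrier M. \<chi> a) = (\<Sum>a\<in>(\<lambda>x. b \<otimes>\<^bsub>M\<^esub> x) ` carrier M. \<chi> a)"
    using surj_const_mult[OF b(1)] by simp
  also have "\<dots> = (\<Sum>a\<in>carrier M. \<chi> (b \<otimes>\<^bsub>M\<^esub> a))"
    by (rule sum.reindex[OF inj_on_cmult[OF b(1)], unfolded comp_def])
  also have "\<dots> = \<chi> b * (\<Sum>a\<in>carrier M. \<chi> a)"
    by (simp add: sum_distrib_left char_mul[OF assms(3) b(1)])
  finally have "(1 - \<chi> b) * (\<Sum>a\<in>carrier M. \<chi> a) = 0" by (simp add: algebra_simps)
  thus ?thesis using b False by simp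
qed



context
  fixes M :: "('a, 'b) monoid_scheme" and J :: "'a \<Rightarrow> 'a \<Rightarrow> complex"
    and i :: "('a \<Rightarrow> complex) \<Rightarrow> ('a \<Rightarrow> complex)"
  assumes cg: "comm_group M" and fin: "finite (carrier M)" and jac: "jacobi_function M J"
    and bij: "bij_betw i (characters M) (characters M)"
    and ih: "\<forall>x\<in>characters M. i x = char_mult M x (i (char_inv M x))"
    and Jd: "\<forall>a\<in>carrier M. \<forall>b\<in>carrier M.
           J a b = (1 / of_nat (card (carrier M))) *
             (\<Sum>x\<in>characters M. i x a * char_mult M (i x) (char_inv M x) b)"
begin

lemma grp: "group M" using cg by (simp add: comm_group_def)

lemma cfin: "finite (characters M)" using finite_chars[OF grp fin] .

lemma npos: "card (carrier M) > 0"
  using fin monoid.one_closed[OF group.is_monoid[OF grp]] card_gt_0_iff by blast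

lemma iC: "x \<in> characters M \<Longrightarrow> i x \<in> characters M"
  using bij by (auto simp: bij_betw_def)

lemma invC: "x \<in> characters M \<Longrightarrow> char_inv M x \<in> characters M"
  using char_inv_in[OF _ grp] .

lemma GC: "x \<in> characters M \<Longrightarrow> i (char_inv M x) \<in> characters M"
  using iC invC by blast

lemma multC: "x \<in> characters M \<Longrightarrow> y \<in> characters M \<Longrightarrow> char_mult M x y \<in> characters M"
  using char_mult_in[OF _ _ grp] .

lemma eC: "echar M \<in> characters M" using echar_in[OF grp] .

lemma invinv: "x \<in> characters M \<Longrightarrow> char_inv M (char_inv M x) = x"
  by (rule char_eqI[OF invC[OF invC]]) (auto simp: char_inv_val)

lemma i_val: "x \<in> characters M \<Longrightarrow> a \<in> carrier M \<Longrightarrow> i x a = x a * i (char_inv M x) a"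
  using ih char_mult_val by metis

lemma G_eq: "x \<in> characters M \<Longrightarrow> a \<in> carrier M \<Longrightarrow>
   char_mult M (i x) (char_inv M x) a = i (char_inv M x) a"
  using i_val char_nz[of x M a] by (simp add: char_mult_val char_inv_val)

lemma J_eq: "a \<in> carrier M \<Longrightarrow> b \<in> carrier M \<Longrightarrow>
   J a b = (1 / of_nat (card (carrier M))) * (\<Sum>x\<in>characters M. i x a * i (char_inv M x) b)"
  using Jd G_eq by simp

lemma i_inj: "x \<in> characters M \<Longrightarrow> y \<in> characters M \<Longrightarrow> i x = i y \<Longrightarrow> x = y"
  using bij by (auto simp: bij_betw_def inj_on_def)

lemma G_inj: "x \<in> characters M \<Longrightarrow> y \<in> characters M \<Longrightarrow> i (char_inv M x) = i (char_inv M y) \<Longrightarrow> x = y"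
  using i_inj invC invinv by metis

lemma i_surj: "\<psi> \<in> characters M \<Longrightarrow> \<exists>x\<in>characters M. i x = \<psi>"
  using bij unfolding bij_betw_def by (metis imageE)

lemma mult_inv_e: assumes "\<phi> \<in> characters M" "\<psi> \<in> characters M"
  shows "char_mult M \<phi> (char_inv M \<psi>) = echar M \<longleftrightarrow> \<phi> = \<psi>"
proof
  assume h: "char_mult M \<phi> (char_inv M \<psi>) = echar M"
  show "\<phi> = \<psi>"
  proof (rule char_eqI[OF assms])
    fix a assume a: "a \<in> carrier M"
    have "\<phi> a * inverse (\<psi> a) = 1" using fun_cong[OF h, of a] a by (simp add: char_mult_val char_inv_val echar_val)
    thus "\<phi> a = \<psi> a" using char_nz[OF assms(2) a] by (simp add: field_simps)
  qed
next
  assume "\<phi> = \<psi>"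
  thus "char_mult M \<phi> (char_inv M \<psi>) = echar M"
    by (intro char_eqI[OF multC[OF assms(1) invC[OF assms(2)]] eC])
       (simp add: char_mult_val char_inv_val echar_val char_nz[OF assms(2)])
qed

lemma orth: assumes "\<phi> \<in> characters M" "\<psi> \<in> characters M"
  shows "(\<Sum>a\<in>carrier M. \<phi> a * inverse (\<psi> a)) = (if \<phi> = \<psi> then of_nat (card (carrier M)) else 0)"
proof -
  have "(\<Sum>a\<in>carrier M. \<phi> a * inverse (\<psi> a)) = (\<Sum>a\<in>carrier M. char_mult M \<phi> (char_inv M \<psi>) a)"
    by (simp add: char_mult_val char_inv_val)
  also have "\<dots> = (if \<phi> = \<psi> then of_nat (card (carrier M)) else 0)"
    using char_sum[OF grp fin multC[OF assms(1) invC[OF assms(2)]]] mult_inv_e[OF assms] by simp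
  finally show ?thesis .
qed

definition x0 where "x0 = inv_into (characters M) i (echar M)"
definition s where "s = i (char_inv M x0)"

lemma x0C: "x0 \<in> characters M"
  unfolding x0_def using bij eC by (metis bij_betw_def inv_into_into)
lemma ix0: "i x0 = echar M"
  unfolding x0_def using bij eC by (metis bij_betw_def f_inv_into_f)
lemma sC: "s \<in> characters M" unfolding s_def using GC[OF x0C] .
lemma s_eq: "s = char_inv M x0"
proof (rule char_eqI[OF sC invC[OF x0C]])
  fix a assume a: "a \<in> carrier M"
  have "1 = x0 a * s a" using i_val[OF x0C a] ix0 a by (simp add: echar_val s_def)
  thus "s a = char_inv M x0 a" using a char_nz[OF x0C a] by (simp add: char_inv_val field_simps)
qed
lemma i_s: "i s = s" using s_def s_eq by simp
lemma Gs: "i (char_inv M s) = echar M" using s_eq invinv[OF x0C] ix0 by simp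

lemma delta_eq: "delta M a = (if a = \<one>\<^bsub>M\<^esub> then 1 else 0)" by (simp add: delta_def)

lemma Bred: assumes a: "a \<in> carrier M" and b: "b \<in> carrier M" and c: "c \<in> carrier M"
  shows "J a b * J (a \<otimes>\<^bsub>M\<^esub> b) c - J a b * delta M (a \<otimes>\<^bsub>M\<^esub> b) + delta M a * delta M b
       = J a (b \<otimes>\<^bsub>M\<^esub> c) * J b c - J b c * delta M (b \<otimes>\<^bsub>M\<^esub> c) + delta M b * delta M c"
proof -
  interpret group M by (rule grp)
  have B: "Jstar M J a b * Jstar M J (a \<otimes>\<^bsub>M\<^esub> b) c = Jstar M J a (b \<otimes>\<^bsub>M\<^esub> c) * Jstar M J b c"
    using jac a b c unfolding jacobi_function_def by blast
  show ?thesis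
    using B a b c
    by (cases "a = \<one>\<^bsub>M\<^esub>"; cases "b = \<one>\<^bsub>M\<^esub>"; cases "c = \<one>\<^bsub>M\<^esub>")
       (simp_all add: Jstar_def delta_def algebra_simps)
qed

lemma swap3: "(\<Sum>a\<in>A. \<Sum>x\<in>X. \<Sum>y\<in>Y. f a x y) = (\<Sum>x\<in>X. \<Sum>y\<in>Y. \<Sum>a\<in>A. f a x y)"
  by (subst sum.swap) (rule sum.cong[OF refl], rule sum.swap)

lemma sum_x0: "(\<Sum>x\<in>characters M. if i x = echar M then f x else 0) = f x0"
proof -
  have "(\<Sum>x\<in>characters M. if i x = echar M then f x else 0) = (\<Sum>x\<in>characters M. if x = x0 then f x else 0)"
    by (rule sum.cong[OF refl]) (metis ix0 i_inj x0C)
  thus ?thesis using x0C cfin by simp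
qed

lemma colsum: assumes d: "d \<in> carrier M" shows "(\<Sum>a\<in>carrier M. J a d) = s d"
proof -
  let ?n = "of_nat (card (carrier M)) :: complex"
  have "(\<Sum>a\<in>carrier M. J a d) = (\<Sum>a\<in>carrier M. (1/?n) * (\<Sum>x\<in>characters M. i x a * i (char_inv M x) d))"
    by (rule sum.cong[OF refl]) (simp add: J_eq d)
  also have "\<dots> = (1/?n) * (\<Sum>a\<in>carrier M. \<Sum>x\<in>characters M. i x a * i (char_inv M x) d)"
    by (simp add: sum_distrib_left)
  also have "\<dots> = (1/?n) * (\<Sum>x\<in>characters M. \<Sum>a\<in>carrier M. i x a * i (char_inv M x) d)"
    by (subst sum.swap) (rule refl)
  also have "\<dots> = (1/?n) * (\<Sum>x\<in>characters M. (\<Sum>a\<in>carrier M. i x a) * i (char_inv M x) d)"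
    by (simp add: sum_distrib_right)
  also have "\<dots> = (1/?n) * (\<Sum>x\<in>characters M. if i x = echar M then ?n * i (char_inv M x) d else 0)"
    by (rule arg_cong[where f="\<lambda>t. (1/?n) * t"], rule sum.cong[OF refl]) (simp add: char_sum[OF grp fin iC])
  also have "\<dots> = s d" using npos by (simp add: sum_x0 s_def)
  finally show ?thesis .
qed

lemma swap4: "(\<Sum>b\<in>B. \<Sum>c\<in>C. \<Sum>x\<in>X. \<Sum>y\<in>Y. f b c x y) = (\<Sum>x\<in>X. \<Sum>y\<in>Y. \<Sum>b\<in>B. \<Sum>c\<in>C. f b c x y)"
proof -
  have "(\<Sum>b\<in>B. \<Sum>c\<in>C. \<Sum>x\<in>X. \<Sum>y\<in>Y. f b c x y) = (\<Sum>b\<in>B. \<Sum>x\<in>X. \<Sum>y\<in>Y. \<Sum>c\<in>C. f b c x y)"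
    by (rule sum.cong[OF refl], rule swap3)
  also have "\<dots> = (\<Sum>x\<in>X. \<Sum>y\<in>Y. \<Sum>b\<in>B. \<Sum>c\<in>C. f b c x y)" by (rule swap3)
  finally show ?thesis .
qed

lemma mult_eq_iff: assumes "x \<in> characters M" "\<gamma> \<in> characters M" "\<beta> \<in> characters M"
  shows "char_mult M x \<gamma> = \<beta> \<longleftrightarrow> x = char_mult M \<beta> (char_inv M \<gamma>)"
proof
  assume h: "char_mult M x \<gamma> = \<beta>"
  show "x = char_mult M \<beta> (char_inv M \<gamma>)"
  proof (rule char_eqI[OF assms(1) multC[OF assms(3) invC[OF assms(2)]]])
    fix a assume a: "a \<in> carrier M"
    have "x a * \<gamma> a = \<beta> a" using fun_cong[OF h, of a] a by (simp add: char_mult_val)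
    thus "x a = char_mult M \<beta> (char_inv M \<gamma>) a" using a char_nz[OF assms(2) a]
      by (simp add: char_mult_val char_inv_val field_simps)
  qed
next
  assume h: "x = char_mult M \<beta> (char_inv M \<gamma>)"
  show "char_mult M x \<gamma> = \<beta>"
  proof (rule char_eqI[OF multC[OF assms(1,2)] assms(3)])
    fix a assume a: "a \<in> carrier M"
    show "char_mult M x \<gamma> a = \<beta> a" using h a char_nz[OF assms(2) a]
      by (simp add: char_mult_val char_inv_val field_simps)
  qed
qed

lemma sum_unique: assumes "y \<in> characters M" "\<And>x. x \<in> characters M \<Longrightarrow> P x \<longleftrightarrow> x = y"
  shows "(\<Sum>x\<in>characters M. if P x then (c::complex) else 0) = c"
proof -
  have "(\<Sum>x\<in>characters M. if P x then c else 0) = (\<Sum>x\<in>characters M. if x = y then c else 0)"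
    by (rule sum.cong[OF refl]) (simp add: assms(2))
  thus ?thesis using assms(1) cfin by simp
qed

lemma delta_mult: assumes "a \<in> carrier M" "b \<in> carrier M"
  shows "delta M (a \<otimes>\<^bsub>M\<^esub> b) = (if a = inv\<^bsub>M\<^esub> b then 1 else 0)"
proof -
  interpret group M by (rule grp)
  have "a \<otimes>\<^bsub>M\<^esub> b = \<one>\<^bsub>M\<^esub> \<longleftrightarrow> a = inv\<^bsub>M\<^esub> b" using assms
    by (metis inv_equality l_inv)
  thus ?thesis by (simp add: delta_def)
qed

lemma delta_mult2: assumes "a \<in> carrier M" "b \<in> carrier M"
  shows "delta M (a \<otimes>\<^bsub>M\<^esub> b) = (if b = inv\<^bsub>M\<^esub> a then 1 else 0)"
proof -
  interpret group M by (rule grp)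
  have "a \<otimes>\<^bsub>M\<^esub> b = \<one>\<^bsub>M\<^esub> \<longleftrightarrow> b = inv\<^bsub>M\<^esub> a" using assms
    by (metis inv_equality r_inv inv_inv inv_closed)
  thus ?thesis by (simp add: delta_def)
qed

lemma J_invb: assumes b: "b \<in> carrier M"
  shows "J (inv\<^bsub>M\<^esub> b) b = (1 / of_nat (card (carrier M))) * (\<Sum>x\<in>characters M. inverse (x b))"
proof -
  interpret group M by (rule grp)
  have "J (inv\<^bsub>M\<^esub> b) b = (1 / of_nat (card (carrier M))) * (\<Sum>x\<in>characters M. i x (inv\<^bsub>M\<^esub> b) * i (char_inv M x) b)"
    using J_eq b by simp
  also have "(\<Sum>x\<in>characters M. i x (inv\<^bsub>M\<^esub> b) * i (char_inv M x) b) = (\<Sum>x\<in>characters M. inverse (x b))"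
  proof (rule sum.cong[OF refl])
    fix x assume x: "x \<in> characters M"
    have "i x (inv\<^bsub>M\<^esub> b) = inverse (x b * i (char_inv M x) b)"
      using char_invval[OF grp iC[OF x] b] i_val[OF x b] by simp
    thus "i x (inv\<^bsub>M\<^esub> b) * i (char_inv M x) b = inverse (x b)"
      using char_nz[OF GC[OF x] b] by (simp add: field_simps)
  qed
  finally show ?thesis .
qed

lemma J_binv: assumes b: "b \<in> carrier M"
  shows "J b (inv\<^bsub>M\<^esub> b) = (1 / of_nat (card (carrier M))) * (\<Sum>x\<in>characters M. x b)"
proof -
  interpret group M by (rule grp)
  have "J b (inv\<^bsub>M\<^esub> b) = (1 / of_nat (card (carrier M))) * (\<Sum>x\<in>characters M. i x b * i (char_inv M x) (inv\<^bsub>M\<^esub> b))"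
    using J_eq b by simp
  also have "(\<Sum>x\<in>characters M. i x b * i (char_inv M x) (inv\<^bsub>M\<^esub> b)) = (\<Sum>x\<in>characters M. x b)"
  proof (rule sum.cong[OF refl])
    fix x assume x: "x \<in> characters M"
    have "i (char_inv M x) (inv\<^bsub>M\<^esub> b) = inverse (i (char_inv M x) b)"
      using char_invval[OF grp GC[OF x] b] by simp
    thus "i x b * i (char_inv M x) (inv\<^bsub>M\<^esub> b) = x b"
      using char_nz[OF GC[OF x] b] i_val[OF x b] by (simp add: field_simps)
  qed
  finally show ?thesis .
qed

lemma dsum: "\<chi> \<in> characters M \<Longrightarrow> (\<Sum>c\<in>carrier M. inverse (\<chi> c) * delta M c) = 1"
proof -
  assume ch: "\<chi> \<in> characters M"
  have "(\<Sum>c\<in>carrier M. inverse (\<chi> c) * delta M c) = (\<Sum>c\<in>carrier M. if c = \<one>\<^bsub>M\<^esub> then inverse (\<chi> c) else 0)"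
    by (rule sum.cong[OF refl]) (simp add: delta_eq)
  also have "\<dots> = 1" using fin char_one[OF grp ch] monoid.one_closed[OF group.is_monoid[OF grp]] by simp
  finally show ?thesis .
qed

lemma P2: assumes \<beta>: "\<beta> \<in> characters M" and \<gamma>: "\<gamma> \<in> characters M"
  shows "(\<Sum>b\<in>carrier M. \<Sum>c\<in>carrier M. inverse (\<beta> b) * inverse (\<gamma> c) *
            (delta M b - J (inv\<^bsub>M\<^esub> b) b)) = 0"
proof -
  interpret group M by (rule grp)
  let ?n = "of_nat (card (carrier M)) :: complex"
  have h2: "(\<Sum>b\<in>carrier M. inverse (\<beta> b) * J (inv\<^bsub>M\<^esub> b) b) = 1"
  proof -
    have "(\<Sum>b\<in>carrier M. inverse (\<beta> b) * J (inv\<^bsub>M\<^esub> b) b)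
        = (\<Sum>b\<in>carrier M. (1/?n) * (\<Sum>x\<in>characters M. char_inv M \<beta> b * inverse (x b)))"
      by (rule sum.cong[OF refl]) (simp add: J_invb char_inv_val sum_distrib_left)
    also have "\<dots> = (1/?n) * (\<Sum>x\<in>characters M. \<Sum>b\<in>carrier M. char_inv M \<beta> b * inverse (x b))"
      by (subst sum_distrib_left[symmetric]) (subst sum.swap, rule refl)
    also have "\<dots> = (1/?n) * (\<Sum>x\<in>characters M. if char_inv M \<beta> = x then ?n else 0)"
      by (simp add: orth[OF invC[OF \<beta>]])
    also have "\<dots> = 1" using invC[OF \<beta>] cfin npos by (simp add: sum.delta')
    finally show ?thesis .
  qed
  have h3: "(\<Sum>b\<in>carrier M. inverse (\<beta> b) * delta M b) = 1"
    using dsum[OF \<beta>] .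
  have "(\<Sum>b\<in>carrier M. \<Sum>c\<in>carrier M. inverse (\<beta> b) * inverse (\<gamma> c) * (delta M b - J (inv\<^bsub>M\<^esub> b) b))
      = (\<Sum>b\<in>carrier M. inverse (\<beta> b) * (delta M b - J (inv\<^bsub>M\<^esub> b) b)) * (\<Sum>c\<in>carrier M. inverse (\<gamma> c))"
    by (simp add: sum_distrib_left sum_distrib_right mult_ac)
  also have "(\<Sum>b\<in>carrier M. inverse (\<beta> b) * (delta M b - J (inv\<^bsub>M\<^esub> b) b)) = 0"
    using h2 h3 by (simp add: right_diff_distrib sum_subtractf)
  finally show ?thesis by simp
qed

lemma P4: assumes \<beta>: "\<beta> \<in> characters M" and \<gamma>: "\<gamma> \<in> characters M"
  shows "(\<Sum>b\<in>carrier M. \<Sum>c\<in>carrier M. inverse (\<beta> b) * inverse (\<gamma> c) *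
            (of_nat (card (carrier M)) * delta M b * delta M c
             - of_nat (card (carrier M)) * J b c * delta M (b \<otimes>\<^bsub>M\<^esub> c))) = 0"
proof -
  interpret group M by (rule grp)
  let ?n = "of_nat (card (carrier M)) :: complex"
  have A: "(\<Sum>b\<in>carrier M. \<Sum>c\<in>carrier M. inverse (\<beta> b) * inverse (\<gamma> c) * (?n * delta M b * delta M c)) = ?n"
  proof -
    note d1 = dsum
    have "(\<Sum>b\<in>carrier M. \<Sum>c\<in>carrier M. inverse (\<beta> b) * inverse (\<gamma> c) * (?n * delta M b * delta M c))
       = (\<Sum>b\<in>carrier M. inverse (\<beta> b) * delta M b * ?n * (\<Sum>c\<in>carrier M. inverse (\<gamma> c) * delta M c))"
      by (rule sum.cong[OF refl]) (simp add: sum_distrib_left mult_ac)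
    also have "\<dots> = (\<Sum>b\<in>carrier M. inverse (\<beta> b) * delta M b) * ?n"
      using d1[OF \<gamma>] by (simp add: sum_distrib_right)
    also have "\<dots> = ?n" using d1[OF \<beta>] by simp
    finally show ?thesis .
  qed
  have B: "(\<Sum>b\<in>carrier M. \<Sum>c\<in>carrier M. inverse (\<beta> b) * inverse (\<gamma> c) * (?n * J b c * delta M (b \<otimes>\<^bsub>M\<^esub> c))) = ?n"
  proof -
    have "(\<Sum>b\<in>carrier M. \<Sum>c\<in>carrier M. inverse (\<beta> b) * inverse (\<gamma> c) * (?n * J b c * delta M (b \<otimes>\<^bsub>M\<^esub> c)))
        = (\<Sum>b\<in>carrier M. inverse (\<beta> b) * inverse (\<gamma> (inv\<^bsub>M\<^esub> b)) * (?n * J b (inv\<^bsub>M\<^esub> b)))"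
    proof (rule sum.cong[OF refl])
      fix b assume b: "b \<in> carrier M"
      have "(\<Sum>c\<in>carrier M. inverse (\<beta> b) * inverse (\<gamma> c) * (?n * J b c * delta M (b \<otimes>\<^bsub>M\<^esub> c)))
          = (\<Sum>c\<in>carrier M. if c = inv\<^bsub>M\<^esub> b then inverse (\<beta> b) * inverse (\<gamma> c) * (?n * J b c) else 0)"
        by (rule sum.cong[OF refl]) (simp add: delta_mult2 b)
      also have "\<dots> = inverse (\<beta> b) * inverse (\<gamma> (inv\<^bsub>M\<^esub> b)) * (?n * J b (inv\<^bsub>M\<^esub> b))"
        using b fin by simp
      finally show "(\<Sum>c\<in>carrier M. inverse (\<beta> b) * inverse (\<gamma> c) * (?n * J b c * delta M (b \<otimes>\<^bsub>M\<^esub> c)))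
          = inverse (\<beta> b) * inverse (\<gamma> (inv\<^bsub>M\<^esub> b)) * (?n * J b (inv\<^bsub>M\<^esub> b))" .
    qed
    also have "\<dots> = (\<Sum>b\<in>carrier M. \<Sum>x\<in>characters M. char_mult M x \<gamma> b * inverse (\<beta> b))"
    proof (rule sum.cong[OF refl])
      fix b assume b: "b \<in> carrier M"
      show "inverse (\<beta> b) * inverse (\<gamma> (inv\<^bsub>M\<^esub> b)) * (?n * J b (inv\<^bsub>M\<^esub> b))
          = (\<Sum>x\<in>characters M. char_mult M x \<gamma> b * inverse (\<beta> b))"
        using npos b char_invval[OF grp \<gamma> b] char_nz[OF \<gamma> b]
        by (simp add: J_binv char_mult_val sum_distrib_left sum_distrib_right sum_divide_distrib mult_ac)
    qed
    also have "\<dots> = (\<Sum>x\<in>characters M. \<Sum>b\<in>carrier M. char_mult M x \<gamma> b * inverse (\<beta> b))"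
      by (rule sum.swap)
    also have "\<dots> = (\<Sum>x\<in>characters M. if char_mult M x \<gamma> = \<beta> then ?n else 0)"
      by (rule sum.cong[OF refl]) (simp add: orth[OF multC[OF _ \<gamma>] \<beta>])
    also have "\<dots> = ?n"
      by (rule sum_unique[OF multC[OF \<beta> invC[OF \<gamma>]]]) (simp add: mult_eq_iff[OF _ \<gamma> \<beta>])
    finally show ?thesis .
  qed
  show ?thesis using A B by (simp add: right_diff_distrib sum_subtractf)
qed

lemma orth2: assumes "\<phi> \<in> characters M" "\<psi> \<in> characters M"
  shows "(\<Sum>a\<in>carrier M. \<phi> a * \<psi> a) = (if \<phi> = char_inv M \<psi> then of_nat (card (carrier M)) else 0)"
proof -
  have "(\<Sum>a\<in>carrier M. \<phi> a * \<psi> a) = (\<Sum>a\<in>carrier M. \<phi> a * inverse (char_inv M \<psi> a))"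
    by (rule sum.cong[OF refl]) (simp add: char_inv_val)
  thus ?thesis using orth[OF assms(1) invC[OF assms(2)]] by simp
qed

definition nu where "nu = 1 / (of_nat (card (carrier M)) :: complex)"

lemma nu_n: "nu * of_nat (card (carrier M)) = 1" using npos by (simp add: nu_def)

lemma J_eq2: "a \<in> carrier M \<Longrightarrow> b \<in> carrier M \<Longrightarrow>
   J a b = nu * (\<Sum>x\<in>characters M. i x a * i (char_inv M x) b)"
  using J_eq nu_def by simp

lemma prod2: "(\<Sum>b\<in>B. \<Sum>c\<in>C. (k::complex) * (f b * g c)) = k * ((\<Sum>b\<in>B. f b) * (\<Sum>c\<in>C. g c))"
  unfolding sum_product by (simp only: sum_distrib_left)

lemma prod2': "((k::complex) * (\<Sum>x\<in>A. f x)) * (l * (\<Sum>y\<in>B. g y)) = (\<Sum>x\<in>A. \<Sum>y\<in>B. k * l * (f x * g y))"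
proof -
  have "((k::complex) * (\<Sum>x\<in>A. f x)) * (l * (\<Sum>y\<in>B. g y)) = (k * l) * ((\<Sum>x\<in>A. f x) * (\<Sum>y\<in>B. g y))"
    by (simp only: mult_ac)
  also have "\<dots> = (\<Sum>x\<in>A. \<Sum>y\<in>B. k * l * (f x * g y))"
    unfolding sum_product by (simp only: sum_distrib_left)
  finally show ?thesis .
qed

lemma A1: assumes b: "b \<in> carrier M" and c: "c \<in> carrier M"
  shows "(\<Sum>a\<in>carrier M. J a b * J (a \<otimes>\<^bsub>M\<^esub> b) c) =
     nu * (\<Sum>x\<in>characters M. \<Sum>y\<in>characters M.
        (if i x = char_inv M (i y) then 1 else 0) * (i (char_inv M x) b * i y b * i (char_inv M y) c))"
proof -
  interpret group M by (rule grp)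
  let ?n = "of_nat (card (carrier M)) :: complex"
  let ?K = "\<lambda>x y. i (char_inv M x) b * i y b * i (char_inv M y) c"
  have "(\<Sum>a\<in>carrier M. J a b * J (a \<otimes>\<^bsub>M\<^esub> b) c) =
      (\<Sum>a\<in>carrier M. \<Sum>x\<in>characters M. \<Sum>y\<in>characters M. nu * nu * (i x a * i y a) * ?K x y)"
  proof (rule sum.cong[OF refl])
    fix a assume a: "a \<in> carrier M"
    have "J a b * J (a \<otimes>\<^bsub>M\<^esub> b) c = (nu * (\<Sum>x\<in>characters M. i x a * i (char_inv M x) b)) *
          (nu * (\<Sum>y\<in>characters M. i y a * i y b * i (char_inv M y) c))"
      using a b c by (simp add: J_eq2 char_mul[OF iC])
    also have "\<dots> = (\<Sum>x\<in>characters M. \<Sum>y\<in>characters M. nu * nu * ((i x a * i (char_inv M x) b) * (i y a * i y b * i (char_inv M y) c)))"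
      by (rule prod2')
    also have "\<dots> = (\<Sum>x\<in>characters M. \<Sum>y\<in>characters M. nu * nu * (i x a * i y a) * ?K x y)"
      by (rule sum.cong[OF refl], rule sum.cong[OF refl]) (simp add: mult_ac)
    finally show "J a b * J (a \<otimes>\<^bsub>M\<^esub> b) c = (\<Sum>x\<in>characters M. \<Sum>y\<in>characters M. nu * nu * (i x a * i y a) * ?K x y)" .
  qed
  also have "\<dots> = (\<Sum>x\<in>characters M. \<Sum>y\<in>characters M. \<Sum>a\<in>carrier M. nu * nu * (i x a * i y a) * ?K x y)"
    by (rule swap3)
  also have "\<dots> = (\<Sum>x\<in>characters M. \<Sum>y\<in>characters M. nu * nu * (\<Sum>a\<in>carrier M. i x a * i y a) * ?K x y)"
    by (simp add: sum_distrib_left sum_distrib_right)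
  also have "\<dots> = (\<Sum>x\<in>characters M. \<Sum>y\<in>characters M. nu * ((if i x = char_inv M (i y) then 1 else 0) * ?K x y))"
    by (rule sum.cong[OF refl], rule sum.cong[OF refl]) (use nu_n in \<open>simp add: orth2[OF iC iC]\<close>)
  also have "\<dots> = nu * (\<Sum>x\<in>characters M. \<Sum>y\<in>characters M. (if i x = char_inv M (i y) then 1 else 0) * ?K x y)"
    by (simp add: sum_distrib_left)
  finally show ?thesis .
qed

lemma P1: assumes \<beta>: "\<beta> \<in> characters M" and \<gamma>: "\<gamma> \<in> characters M"
  shows "(\<Sum>b\<in>carrier M. \<Sum>c\<in>carrier M. inverse (\<beta> b) * inverse (\<gamma> c) *
            (\<Sum>a\<in>carrier M. J a b * J (a \<otimes>\<^bsub>M\<^esub> b) c))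
       = of_nat (card (carrier M)) * (\<Sum>x\<in>characters M. \<Sum>y\<in>characters M.
           if i x = char_inv M (i y) \<and> char_mult M (i (char_inv M x)) (i y) = \<beta> \<and> i (char_inv M y) = \<gamma> then 1 else 0)"
proof -
  let ?n = "of_nat (card (carrier M)) :: complex"
  let ?Q = "\<lambda>x y. (if i x = char_inv M (i y) then 1 else 0) :: complex"
  have "(\<Sum>b\<in>carrier M. \<Sum>c\<in>carrier M. inverse (\<beta> b) * inverse (\<gamma> c) *
            (\<Sum>a\<in>carrier M. J a b * J (a \<otimes>\<^bsub>M\<^esub> b) c))
     = (\<Sum>b\<in>carrier M. \<Sum>c\<in>carrier M. \<Sum>x\<in>characters M. \<Sum>y\<in>characters M.
          (nu * ?Q x y) * ((i (char_inv M x) b * i y b * inverse (\<beta> b)) * (i (char_inv M y) c * inverse (\<gamma> c))))"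
    by (rule sum.cong[OF refl], rule sum.cong[OF refl]) (simp add: A1 sum_distrib_left mult_ac)
  also have "\<dots> = (\<Sum>x\<in>characters M. \<Sum>y\<in>characters M. \<Sum>b\<in>carrier M. \<Sum>c\<in>carrier M.
          (nu * ?Q x y) * ((i (char_inv M x) b * i y b * inverse (\<beta> b)) * (i (char_inv M y) c * inverse (\<gamma> c))))"
    by (rule swap4)
  also have "\<dots> = (\<Sum>x\<in>characters M. \<Sum>y\<in>characters M.
          (nu * ?Q x y) * ((\<Sum>b\<in>carrier M. char_mult M (i (char_inv M x)) (i y) b * inverse (\<beta> b)) *
                               (\<Sum>c\<in>carrier M. i (char_inv M y) c * inverse (\<gamma> c))))"
  proof (rule sum.cong[OF refl], rule sum.cong[OF refl])
    fix x y
    have "(\<Sum>b\<in>carrier M. \<Sum>c\<in>carrier M.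
          (nu * ?Q x y) * ((i (char_inv M x) b * i y b * inverse (\<beta> b)) * (i (char_inv M y) c * inverse (\<gamma> c))))
        = (\<Sum>b\<in>carrier M. \<Sum>c\<in>carrier M.
          (nu * ?Q x y) * ((char_mult M (i (char_inv M x)) (i y) b * inverse (\<beta> b)) * (i (char_inv M y) c * inverse (\<gamma> c))))"
      by (rule sum.cong[OF refl], rule sum.cong[OF refl]) (simp add: char_mult_val)
    also have "\<dots> = (nu * ?Q x y) * ((\<Sum>b\<in>carrier M. char_mult M (i (char_inv M x)) (i y) b * inverse (\<beta> b)) *
                               (\<Sum>c\<in>carrier M. i (char_inv M y) c * inverse (\<gamma> c)))"
      by (rule prod2)
    finally show "(\<Sum>b\<in>carrier M. \<Sum>c\<in>carrier M.
          (nu * ?Q x y) * ((i (char_inv M x) b * i y b * inverse (\<beta> b)) * (i (char_inv M y) c * inverse (\<gamma> c))))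
        = (nu * ?Q x y) * ((\<Sum>b\<in>carrier M. char_mult M (i (char_inv M x)) (i y) b * inverse (\<beta> b)) *
                               (\<Sum>c\<in>carrier M. i (char_inv M y) c * inverse (\<gamma> c)))" .
  qed
  also have "\<dots> = (\<Sum>x\<in>characters M. \<Sum>y\<in>characters M.
          ?n * (if i x = char_inv M (i y) \<and> char_mult M (i (char_inv M x)) (i y) = \<beta> \<and> i (char_inv M y) = \<gamma> then 1 else 0))"
    by (rule sum.cong[OF refl], rule sum.cong[OF refl])
       (use nu_n in \<open>simp add: orth[OF multC[OF GC iC] \<beta>] orth[OF GC \<gamma>]\<close>)
  also have "\<dots> = ?n * (\<Sum>x\<in>characters M. \<Sum>y\<in>characters M.
           if i x = char_inv M (i y) \<and> char_mult M (i (char_inv M x)) (i y) = \<beta> \<and> i (char_inv M y) = \<gamma> then 1 else 0)"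
    by (simp add: sum_distrib_left)
  finally show ?thesis .
qed

lemma P3: assumes \<beta>: "\<beta> \<in> characters M" and \<gamma>: "\<gamma> \<in> characters M"
  shows "(\<Sum>b\<in>carrier M. \<Sum>c\<in>carrier M. inverse (\<beta> b) * inverse (\<gamma> c) *
            (s (b \<otimes>\<^bsub>M\<^esub> c) * J b c))
       = of_nat (card (carrier M)) * (\<Sum>x\<in>characters M.
           if char_mult M (i x) s = \<beta> \<and> char_mult M (i (char_inv M x)) s = \<gamma> then 1 else 0)"
proof -
  let ?n = "of_nat (card (carrier M)) :: complex"
  have "(\<Sum>b\<in>carrier M. \<Sum>c\<in>carrier M. inverse (\<beta> b) * inverse (\<gamma> c) * (s (b \<otimes>\<^bsub>M\<^esub> c) * J b c))
     = (\<Sum>b\<in>carrier M. \<Sum>c\<in>carrier M. \<Sum>x\<in>characters M.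
          nu * ((char_mult M (i x) s b * inverse (\<beta> b)) * (char_mult M (i (char_inv M x)) s c * inverse (\<gamma> c))))"
    by (rule sum.cong[OF refl], rule sum.cong[OF refl]) (simp add: J_eq2 char_mul[OF sC] char_mult_val sum_distrib_left mult_ac)
  also have "\<dots> = (\<Sum>x\<in>characters M. \<Sum>b\<in>carrier M. \<Sum>c\<in>carrier M.
          nu * ((char_mult M (i x) s b * inverse (\<beta> b)) * (char_mult M (i (char_inv M x)) s c * inverse (\<gamma> c))))"
    by (subst sum.swap, rule sum.cong[OF refl], rule sum.swap)
  also have "\<dots> = (\<Sum>x\<in>characters M.
          nu * ((\<Sum>b\<in>carrier M. char_mult M (i x) s b * inverse (\<beta> b)) *
                     (\<Sum>c\<in>carrier M. char_mult M (i (char_inv M x)) s c * inverse (\<gamma> c))))"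
    by (rule sum.cong[OF refl], rule prod2)
  also have "\<dots> = (\<Sum>x\<in>characters M.
          ?n * (if char_mult M (i x) s = \<beta> \<and> char_mult M (i (char_inv M x)) s = \<gamma> then 1 else 0))"
    by (rule sum.cong[OF refl]) (use nu_n in \<open>simp add: orth[OF multC[OF iC sC] \<beta>] orth[OF multC[OF GC sC] \<gamma>]\<close>)
  also have "\<dots> = ?n * (\<Sum>x\<in>characters M.
           if char_mult M (i x) s = \<beta> \<and> char_mult M (i (char_inv M x)) s = \<gamma> then 1 else 0)"
    by (simp add: sum_distrib_left)
  finally show ?thesis .
qed

lemma SE: assumes b: "b \<in> carrier M" and c: "c \<in> carrier M"
  shows "(\<Sum>a\<in>carrier M. J a b * J (a \<otimes>\<^bsub>M\<^esub> b) c)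
     = s (b \<otimes>\<^bsub>M\<^esub> c) * J b c
       + (of_nat (card (carrier M)) * delta M b * delta M c - of_nat (card (carrier M)) * J b c * delta M (b \<otimes>\<^bsub>M\<^esub> c))
       - (delta M b - J (inv\<^bsub>M\<^esub> b) b)"
proof -
  interpret group M by (rule grp)
  have E: "(\<Sum>a\<in>carrier M. J a b * J (a \<otimes>\<^bsub>M\<^esub> b) c - J a b * delta M (a \<otimes>\<^bsub>M\<^esub> b) + delta M a * delta M b)
      = (\<Sum>a\<in>carrier M. J a (b \<otimes>\<^bsub>M\<^esub> c) * J b c - J b c * delta M (b \<otimes>\<^bsub>M\<^esub> c) + delta M b * delta M c)"
    by (rule sum.cong[OF refl]) (simp add: Bred b c)
  have e1: "(\<Sum>a\<in>carrier M. J a b * delta M (a \<otimes>\<^bsub>M\<^esub> b)) = J (inv\<^bsub>M\<^esub> b) b"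
  proof -
    have "(\<Sum>a\<in>carrier M. J a b * delta M (a \<otimes>\<^bsub>M\<^esub> b)) = (\<Sum>a\<in>carrier M. if a = inv\<^bsub>M\<^esub> b then J a b else 0)"
      by (rule sum.cong[OF refl]) (simp add: delta_mult b)
    thus ?thesis using fin b by simp
  qed
  have e2: "(\<Sum>a\<in>carrier M. delta M a * delta M b) = delta M b"
  proof -
    have "(\<Sum>a\<in>carrier M. delta M a * delta M b) = (\<Sum>a\<in>carrier M. if a = \<one>\<^bsub>M\<^esub> then delta M b else 0)"
      by (rule sum.cong[OF refl]) (simp add: delta_eq)
    thus ?thesis using fin by simp
  qed
  have e3: "(\<Sum>a\<in>carrier M. J a (b \<otimes>\<^bsub>M\<^esub> c) * J b c) = s (b \<otimes>\<^bsub>M\<^esub> c) * J b c"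
    using colsum[of "b \<otimes>\<^bsub>M\<^esub> c"] b c by (simp add: sum_distrib_right[symmetric])
  have "(\<Sum>a\<in>carrier M. J a b * J (a \<otimes>\<^bsub>M\<^esub> b) c) - J (inv\<^bsub>M\<^esub> b) b + delta M b
     = s (b \<otimes>\<^bsub>M\<^esub> c) * J b c - of_nat (card (carrier M)) * (J b c * delta M (b \<otimes>\<^bsub>M\<^esub> c))
       + of_nat (card (carrier M)) * (delta M b * delta M c)"
    using E by (simp only: sum.distrib sum_subtractf e1 e2 e3 sum_constant)
  then show ?thesis by (simp add: algebra_simps)
qed

lemma key_sum: assumes \<beta>: "\<beta> \<in> characters M" and \<gamma>: "\<gamma> \<in> characters M"
  shows "(\<Sum>x\<in>characters M. \<Sum>y\<in>characters M.
           if i x = char_inv M (i y) \<and> char_mult M (i (char_inv M x)) (i y) = \<beta> \<and> i (char_inv M y) = \<gamma> then 1 else 0)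
       = (\<Sum>x\<in>characters M.
           if char_mult M (i x) s = \<beta> \<and> char_mult M (i (char_inv M x)) s = \<gamma> then (1::complex) else 0)"
proof -
  let ?w = "\<lambda>b c. inverse (\<beta> b) * inverse (\<gamma> c)"
  let ?T3 = "\<lambda>b c. s (b \<otimes>\<^bsub>M\<^esub> c) * J b c"
  let ?T4 = "\<lambda>b c. of_nat (card (carrier M)) * delta M b * delta M c - of_nat (card (carrier M)) * J b c * delta M (b \<otimes>\<^bsub>M\<^esub> c)"
  let ?T2 = "\<lambda>b c. delta M b - J (inv\<^bsub>M\<^esub> b) b"
  have "(\<Sum>b\<in>carrier M. \<Sum>c\<in>carrier M. ?w b c * (\<Sum>a\<in>carrier M. J a b * J (a \<otimes>\<^bsub>M\<^esub> b) c))
      = (\<Sum>b\<in>carrier M. \<Sum>c\<in>carrier M. ?w b c * ?T3 b c + ?w b c * ?T4 b c - ?w b c * ?T2 b c)"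
    by (rule sum.cong[OF refl], rule sum.cong[OF refl]) (simp add: SE algebra_simps)
  also have "\<dots> = (\<Sum>b\<in>carrier M. \<Sum>c\<in>carrier M. ?w b c * ?T3 b c)
       + (\<Sum>b\<in>carrier M. \<Sum>c\<in>carrier M. ?w b c * ?T4 b c) - (\<Sum>b\<in>carrier M. \<Sum>c\<in>carrier M. ?w b c * ?T2 b c)"
    by (simp add: sum.distrib sum_subtractf)
  also have "\<dots> = (\<Sum>b\<in>carrier M. \<Sum>c\<in>carrier M. ?w b c * ?T3 b c)"
    using P2[OF \<beta> \<gamma>] P4[OF \<beta> \<gamma>] by simp
  finally have "of_nat (card (carrier M)) * (\<Sum>x\<in>characters M. \<Sum>y\<in>characters M.
           if i x = char_inv M (i y) \<and> char_mult M (i (char_inv M x)) (i y) = \<beta> \<and> i (char_inv M y) = \<gamma> then 1 else 0)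
       = of_nat (card (carrier M)) * (\<Sum>x\<in>characters M.
           if char_mult M (i x) s = \<beta> \<and> char_mult M (i (char_inv M x)) s = \<gamma> then (1::complex) else 0)"
    using P1[OF \<beta> \<gamma>] P3[OF \<beta> \<gamma>] by simp
  thus ?thesis using npos by simp
qed

lemma count_sum: "finite A \<Longrightarrow> (\<Sum>x\<in>A. if P x then 1 else 0 :: complex) = of_nat (card {x\<in>A. P x})"
  by (simp add: sum.inter_filter[symmetric])

lemma key_exists: assumes \<beta>: "\<beta> \<in> characters M" and \<gamma>: "\<gamma> \<in> characters M"
  and x1: "x1 \<in> characters M" "char_mult M (i x1) s = \<beta>" "char_mult M (i (char_inv M x1)) s = \<gamma>"
  shows "\<exists>x\<in>characters M. \<exists>y\<in>characters M. i x = char_inv M (i y) \<and> char_mult M (i (char_inv M x)) (i y) = \<beta> \<and> i (char_inv M y) = \<gamma>"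
proof (rule ccontr)
  assume nex: "\<not> ?thesis"
  have "(\<Sum>x\<in>characters M. \<Sum>y\<in>characters M.
           if i x = char_inv M (i y) \<and> char_mult M (i (char_inv M x)) (i y) = \<beta> \<and> i (char_inv M y) = \<gamma> then 1 else (0::complex)) = 0"
    using nex by (intro sum.neutral ballI) auto
  moreover have "card {x\<in>characters M. char_mult M (i x) s = \<beta> \<and> char_mult M (i (char_inv M x)) s = \<gamma>} > 0"
    using x1 cfin by (subst card_gt_0_iff) auto
  ultimately show False using key_sum[OF \<beta> \<gamma>] count_sum[OF cfin] by simp
qed

lemma mult_e: "\<phi> \<in> characters M \<Longrightarrow> char_mult M \<phi> (echar M) = \<phi>"
  by (rule char_eqI[OF multC[OF _ eC]]) (simp_all add: char_mult_val echar_val)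
lemma e_mult: "\<phi> \<in> characters M \<Longrightarrow> char_mult M (echar M) \<phi> = \<phi>"
  by (rule char_eqI[OF multC[OF eC]]) (simp_all add: char_mult_val echar_val)
lemma inv_e: "char_inv M (echar M) = echar M"
  by (rule char_eqI[OF invC[OF eC] eC]) (simp add: char_inv_val echar_val)

lemma s_is_e: "s = echar M"
proof -
  obtain x y where x: "x \<in> characters M" and y: "y \<in> characters M"
    and h1: "i x = char_inv M (i y)" and h2: "char_mult M (i (char_inv M x)) (i y) = char_mult M s s"
    and h3: "i (char_inv M y) = s"
    using key_exists[OF multC[OF sC sC] sC sC] i_s Gs e_mult[OF sC] by auto
  have "y = x0" using h3 G_inj[OF y x0C] s_def by simp
  hence iy: "i y = echar M" using ix0 by simp
  hence "i x = i x0" using h1 inv_e ix0 by simp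
  hence "x = x0" using i_inj[OF x x0C] by simp
  hence "char_mult M s (echar M) = char_mult M s s" using h2 iy s_def by simp
  hence ss: "s = char_mult M s s" using mult_e[OF sC] by simp
  show ?thesis
  proof (rule char_eqI[OF sC eC])
    fix a assume a: "a \<in> carrier M"
    have "s a = s a * s a" using fun_cong[OF ss, of a] a by (simp add: char_mult_val)
    thus "s a = echar M a" using char_nz[OF sC a] a by (simp add: echar_val)
  qed
qed

lemma all_e: assumes z: "z \<in> characters M" shows "z = x0"
proof -
  obtain x y where x: "x \<in> characters M" and y: "y \<in> characters M"
    and h1: "i x = char_inv M (i y)" and h2: "char_mult M (i (char_inv M x)) (i y) = i z"
    and h3: "i (char_inv M y) = i (char_inv M z)"
    using key_exists[OF iC[OF z] GC[OF z] z] s_is_e mult_e[OF iC[OF z]] mult_e[OF GC[OF z]] by auto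
  have yz: "y = z" using G_inj[OF y z h3] .
  have Gx: "i (char_inv M x) = echar M"
  proof (rule char_eqI[OF GC[OF x] eC])
    fix a assume a: "a \<in> carrier M"
    have "i (char_inv M x) a * i z a = i z a" using fun_cong[OF h2, of a] a yz by (simp add: char_mult_val)
    thus "i (char_inv M x) a = echar M a" using char_nz[OF iC[OF z] a] a by (simp add: echar_val)
  qed
  have "x = x0" using G_inj[OF x x0C] Gx s_is_e s_def by simp
  hence "char_inv M (i z) = echar M" using h1 yz ix0 by simp
  hence "i z = echar M" using invinv[OF iC[OF z]] inv_e by metis
  thus "z = x0" using i_inj[OF z x0C] ix0 by simp
qed

lemma final: "carrier M = {\<one>\<^bsub>M\<^esub>}"
proof (rule ccontr)
  interpret group M by (rule grp)
  assume ne: "carrier M \<noteq> {\<one>\<^bsub>M\<^esub>}"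
  then obtain c where c: "c \<in> carrier M" "c \<noteq> \<one>\<^bsub>M\<^esub>" using one_closed by blast
  have x0e: "x0 = echar M" using all_e[OF eC] by simp
  have Cs: "characters M = {echar M}" using all_e eC x0e by blast
  have ie: "i (echar M) = echar M" using ix0 x0e by simp
  have Jc: "\<And>a b. a \<in> carrier M \<Longrightarrow> b \<in> carrier M \<Longrightarrow> J a b = nu"
    using ie inv_e by (simp add: J_eq2 Cs echar_val)
  have B: "Jstar M J \<one>\<^bsub>M\<^esub> \<one>\<^bsub>M\<^esub> * Jstar M J (\<one>\<^bsub>M\<^esub> \<otimes>\<^bsub>M\<^esub> \<one>\<^bsub>M\<^esub>) c
      = Jstar M J \<one>\<^bsub>M\<^esub> (\<one>\<^bsub>M\<^esub> \<otimes>\<^bsub>M\<^esub> c) * Jstar M J \<one>\<^bsub>M\<^esub> c"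
    using jac c(1) one_closed unfolding jacobi_function_def by blast
  hence "(nu - 2) * (nu - 1) = (nu - 1) * (nu - 1)"
    using c Jc one_closed by (simp add: Jstar_def delta_def algebra_simps)
  moreover have "(nu - 2) * (nu - 1) - (nu - 1) * (nu - 1) = 1 - nu" by (simp add: algebra_simps)
  ultimately have "nu = 1" by simp
  hence "card (carrier M) = 1" using npos by (simp add: nu_def)
  then obtain z where "carrier M = {z}" by (rule card_1_singletonE)
  thus False using c one_closed by auto
qed

end

theorem mainTheorem13:
  fixes M :: "('a, 'b) monoid_scheme"
    and J :: "'a \<Rightarrow> 'a \<Rightarrow> complex"
    and i :: "('a \<Rightarrow> complex) \<Rightarrow> ('a \<Rightarrow> complex)"
  assumes "comm_group M"
    and "finite (carrier M)"
    and "jacobi_function M J"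
    and "bij_betw i (characters M) (characters M)"
    and "\<forall>x\<in>characters M. i x = char_mult M x (i (char_inv M x))"
    and "\<forall>a\<in>carrier M. \<forall>b\<in>carrier M.
           J a b = (1 / of_nat (card (carrier M))) *
             (\<Sum>x\<in>characters M. i x a * char_mult M (i x) (char_inv M x) b)"
  shows "carrier M = {\<one>\<^bsub>M\<^esub>}"
    by (rule final[OF assms])

end
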